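(* Let $m \geq 1$, let $\alpha$ be a generator of the cyclic group $\mathrm{GF}(2^m)^*$, and let $d$ be a positive integer with $\gcd(d, 2^m-1) = 1$. For $t \in \mathbb{Z}/(2^m-1)\mathbb{Z}$ define $$C_d(t) = \sum_{x \in \mathrm{GF}(2^m)^*} (-1)^{\mathrm{Tr}(\alpha^{-t} x + x^d)},$$ where $\mathrm{Tr}\colon \mathrm{GF}(2^m) \to \mathrm{GF}(2)$ is the absolute trace. If $C_d$ is three-valued, i.e. $|\{C_d(t) : t \in \mathbb{Z}/(2^m-1)\mathbb{Z}\}| = 3$, then $C_d(t) = -1$ for at least one value of $t$.
   Context: $C_d(t)$ is the cross-correlation function between the binary maximal linear sequence $\{\mathrm{Tr}(\alpha^i)\}$ and its decimation $\{\mathrm{Tr}(\alpha^{di})\}$. "$C_d$ is $v$-valued" means it takes exactly $v$ distinct values as $t$ ranges over $\mathbb{Z}/(2^m-1)\mathbb{Z}$. *)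

theory Defs
  imports Main
begin

text \<open>Absolute trace GF(2^m) -> GF(2) (values in the prime subfield {0,1}).\<close>
definition abs_trace :: "nat \<Rightarrow> 'a::field \<Rightarrow> 'a" where
  "abs_trace m x = (\<Sum>i<m. x ^ (2 ^ i))"

definition tr_sign :: "nat \<Rightarrow> 'a::field \<Rightarrow> int" where
  "tr_sign m y = (if abs_trace m y = 0 then 1 else -1)"

definition mult_generator :: "'a::field \<Rightarrow> bool" where
  "mult_generator \<alpha> \<longleftrightarrow> \<alpha> \<noteq> 0 \<and> (\<forall>x. x \<noteq> 0 \<longrightarrow> (\<exists>i::nat. x = \<alpha> ^ i))"

definition cross_corr :: "nat \<Rightarrow> 'a::{field,finite} \<Rightarrow> nat \<Rightarrow> nat \<Rightarrow> int" where
  "cross_corr m \<alpha> d t = (\<Sum>x\<in>UNIV - {0}. tr_sign m (inverse (\<alpha> ^ t) * x + x ^ d))"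

end

theory Submission
  imports Defs "HOL-Number_Theory.Number_Theory" "HOL-Computational_Algebra.Polynomial"
begin


lemma mult2_bound:
  fixes w q :: int and j m :: nat
  assumes q: "q = 2^m" and w0: "w \<noteq> 0" and wq: "\<bar>w\<bar> < q" and "q + w \<noteq> 0"
  shows "multiplicity (2::int) (q + w) < m \<and> 2 ^ multiplicity (2::int) (q + w) dvd w"
proof -
  let ?j = "multiplicity (2::int) (q + w)"
  have d: "2 ^ ?j dvd q + w" by (rule multiplicity_dvd)
  have jm: "?j < m"
  proof (rule ccontr)
    assume "\<not> ?j < m"
    hence "(2::int)^m dvd 2^?j" by (simp add: le_imp_power_dvd)
    with d have "q dvd q + w" using q dvd_trans by blast
    hence "q dvd w" by (simp add: dvd_add_right_iff)
    then show False using w0 wq by (metis dvd_imp_le_int abs_dvd_iff not_le order.strict_iff_order abs_le_iff)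
  qed
  have "2 ^ ?j dvd q" using jm q by (simp add: le_imp_power_dvd)
  with d have "2 ^ ?j dvd w" by (simp add: dvd_add_right_iff)
  with jm show ?thesis by simp
qed

lemma key_int:
  fixes A B C q :: int and m :: nat
  assumes q: "q = 2^m" and m: "m \<ge> 1"
    and ord: "A < B" "B < C" and nz: "A \<noteq> 0" "B \<noteq> 0" "C \<noteq> 0"
    and bd: "\<bar>A\<bar> < q" "\<bar>B\<bar> < q" "\<bar>C\<bar> < q"
    and h1: "q^2 - (B+C)*q + B*C*(q-1) > 0"
    and h2: "q^2 - (A+C)*q + A*C*(q-1) < 0"
    and h3: "q^2 - (A+B)*q + A*B*(q-1) > 0"
    and h4: "q^2 dvd ((A+B+C)*q^2 - (A*B+B*C+C*A)*q + A*B*C*(q-1))"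
  shows False
proof -
  have q2: "q \<ge> 2"
  proof -
    have "(2::int)^1 \<le> 2^m" using m by (intro power_increasing) auto
    thus ?thesis using q by simp
  qed
  have qA: "q - A > 0" and qC: "q - C > 0" using bd by auto
  have AC: "A * C < 0"
  proof (rule ccontr)
    assume "\<not> A * C < 0"
    hence "A*C \<ge> 0" by simp
    hence "(q-2)*(A*C) \<ge> 0" using q2 by simp
    moreover have "(q-A)*(q-C) > 0" using qA qC by simp
    moreover have "q^2 - (A+C)*q + A*C*(q-1) = (q-A)*(q-C) + (q-2)*(A*C)"
      by (simp add: algebra_simps power2_eq_square)
    ultimately show False using h2 by linarith
  qed
  have A0: "A < 0" and C0: "C > 0" using AC ord
    by (auto simp: mult_less_0_iff)
  define s1 where "s1 = A+B+C"
  define s2 where "s2 = A*B+B*C+C*A"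
  define s3 where "s3 = A*B*C"
  have h4': "q^2 dvd s1*q^2 - s2*q + s3*(q-1)" using h4 unfolding s1_def s2_def s3_def by simp
  have "q dvd s1*q^2 - s2*q + s3*(q-1)" using h4' by (rule dvd_trans[rotated]) (simp add: power2_eq_square)
  moreover have "s1*q^2 - s2*q + s3*(q-1) = q*(s1*q - s2 + s3) - s3"
    by (simp add: algebra_simps power2_eq_square)
  ultimately have "q dvd q*(s1*q - s2 + s3) - s3" by simp
  hence "q dvd s3" by (simp add: dvd_diff_right_iff)
  then obtain k where k: "s3 = q*k" by (auto simp: dvd_def)
  have "s1*q^2 - s2*q + s3*(q-1) = q*q*(s1 + k) - q*(s2 + k)"
    by (simp add: k algebra_simps power2_eq_square)
  with h4' have "q*q dvd q*q*(s1 + k) - q*(s2 + k)" by (simp add: power2_eq_square)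
  hence "q*q dvd q*(s2+k)" by (metis dvd_diff_right_iff dvd_triv_left)
  hence "q dvd s2 + k" using q2 by (simp)
  then obtain l where l: "s2 + k = q*l" by (auto simp: dvd_def)
  have prod: "(q+A)*(q+B)*(q+C) = q*q*(q+s1+l)"
  proof -
    have "(q+A)*(q+B)*(q+C) = q^3 + s1*q^2 + s2*q + s3" unfolding s1_def s2_def s3_def
      by (simp add: algebra_simps power2_eq_square power3_eq_cube)
    also have "... = q*q*(q+s1) + q*(s2 + k)" by (simp add: k algebra_simps power2_eq_square power3_eq_cube)
    also have "... = q*q*(q+s1+l)" by (subst l) (simp add: algebra_simps)
    finally show ?thesis .
  qed
  have pA: "q + A \<noteq> 0" "q+B \<noteq> 0" "q+C \<noteq> 0" using bd by auto
  define jA where "jA = multiplicity (2::int) (q+A)"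
  define jB where "jB = multiplicity (2::int) (q+B)"
  define jC where "jC = multiplicity (2::int) (q+C)"
  have JA: "jA < m" "2^jA dvd A" using mult2_bound[OF q nz(1) bd(1) pA(1)] jA_def by auto
  have JB: "jB < m" "2^jB dvd B" using mult2_bound[OF q nz(2) bd(2) pA(2)] jB_def by auto
  have JC: "jC < m" "2^jC dvd C" using mult2_bound[OF q nz(3) bd(3) pA(3)] jC_def by auto
  have "(2::int)^(2*m) dvd (q+A)*(q+B)*(q+C)" using prod q by (simp add: power_mult_distrib power_add mult_2 )
  hence "2*m \<le> multiplicity (2::int) ((q+A)*(q+B)*(q+C))"
    using pA by (subst (asm) power_dvd_iff_le_multiplicity) auto
  also have "multiplicity (2::int) ((q+A)*(q+B)*(q+C)) = jA + jB + jC"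
    using pA unfolding jA_def jB_def jC_def
    by (simp add: prime_elem_multiplicity_mult_distrib)
  finally have sum: "2*m \<le> jA + jB + jC" .
  have geq: "\<bar>w\<bar> \<ge> 2^j" if "(2::int)^j dvd w" "w \<noteq> 0" for w j
    using dvd_imp_le_int[OF that(2) that(1)] by simp
  show False
  proof (cases "B > 0")
    case True
    have "jA + jB \<le> m"
    proof (rule ccontr)
      assume "\<not> jA + jB \<le> m"
      hence "(2::int)^(m+1) \<le> 2^(jA+jB)" by (intro power_increasing) auto
      also have "... = 2^jA * 2^jB" by (simp add: power_add)
      also have "... \<le> (-A) * B" using geq[OF JA(2) nz(1)] geq[OF JB(2) nz(2)] A0 True
        by (intro mult_mono) auto
      finally have AB: "(-A)*B \<ge> 2*q" using q by simp
      have "q^2 - (A+B)*q + A*B*(q-1) = q*q + (-A)*q - B*q - ((-A)*B)*(q-1)"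
        by (simp add: algebra_simps power2_eq_square)
      also have "... \<le> q*q + (-A)*q - B*q - (2*q)*(q-1)"
        using AB q2 by (intro diff_left_mono mult_right_mono) auto
      also have "... = q*((-A) - q - B + 2)" by (simp add: algebra_simps)
      also have "... \<le> 0" using bd(1) True q2 by (intro mult_nonneg_nonpos) auto
      finally show False using h3 by simp
    qed
    thus False using sum JC by linarith
  next
    case False
    hence B0: "B < 0" using nz by simp
    have "jB + jC \<le> m"
    proof (rule ccontr)
      assume "\<not> jB + jC \<le> m"
      hence "(2::int)^(m+1) \<le> 2^(jB+jC)" by (intro power_increasing) auto
      also have "... = 2^jB * 2^jC" by (simp add: power_add)
      also have "... \<le> (-B) * C" using geq[OF JB(2) nz(2)] geq[OF JC(2) nz(3)] B0 C0
        by (intro mult_mono) auto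
      finally have BC: "(-B)*C \<ge> 2*q" using q by simp
      have "q^2 - (B+C)*q + B*C*(q-1) = q*q + (-B)*q - C*q - ((-B)*C)*(q-1)"
        by (simp add: algebra_simps power2_eq_square)
      also have "... \<le> q*q + (-B)*q - C*q - (2*q)*(q-1)"
        using BC q2 by (intro diff_left_mono mult_right_mono) auto
      also have "... = q*((-B) - q - C + 2)" by (simp add: algebra_simps)
      also have "... \<le> 0" using bd(2) C0 q2 by (intro mult_nonneg_nonpos) auto
      finally show False using h1 by simp
    qed
    thus False using sum JA by linarith
  qed
qed



lemma sort3: "x \<noteq> y \<Longrightarrow> y \<noteq> z \<Longrightarrow> x \<noteq> z \<Longrightarrow> \<exists>A B C. {x,y,z} = {A,B,C::int} \<and> A < B \<and> B < C"
  apply (cases "x < y"; cases "y < z"; cases "x < z")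
  apply (rule exI[of _ x], rule exI[of _ y], rule exI[of _ z], simp)
  apply (rule exI[of _ z], rule exI[of _ x], rule exI[of _ y], force)
  apply (rule exI[of _ x], rule exI[of _ z], rule exI[of _ y], force)
  apply (rule exI[of _ z], rule exI[of _ x], rule exI[of _ y], force)
  apply (rule exI[of _ y], rule exI[of _ x], rule exI[of _ z], force)
  apply (rule exI[of _ y], rule exI[of _ z], rule exI[of _ x], force)
  apply (rule exI[of _ y], rule exI[of _ x], rule exI[of _ z], force)
  apply (rule exI[of _ z], rule exI[of _ y], rule exI[of _ x], force)
  done

definition Wd :: "nat \<Rightarrow> nat \<Rightarrow> 'a::{field,finite} \<Rightarrow> int" where
  "Wd m d a = (\<Sum>x\<in>UNIV. tr_sign m (a*x + x^d))"

definition Tsum :: "nat \<Rightarrow> nat \<Rightarrow> 'b::{field,finite} itself \<Rightarrow> int" where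
  "Tsum m d _ = (\<Sum>z\<in>(UNIV::'b set). \<Sum>x\<in>UNIV. tr_sign m (x^d + (z + x)^d + z^d))"

context
  fixes m :: nat
  assumes cardF: "card (UNIV :: 'a::{field,finite} set) = 2^m"
    and m1: "m \<ge> 1"
begin

lemma char2: "(2::'a) = 0"
proof -
  have "CHAR('a) dvd 2^m" using CHAR_dvd_CARD[where 'a='a] cardF by simp
  moreover have "prime CHAR('a)"
    using prime_CHAR_semidom[where 'a='a] finite_imp_CHAR_pos[where 'a='a] by auto
  ultimately have "CHAR('a) dvd 2" using prime_dvd_power_nat by blast
  hence "CHAR('a) \<le> 2" by (rule dvd_imp_le) auto
  moreover have "CHAR('a) > 1" using \<open>prime CHAR('a)\<close> prime_gt_1_nat by blast
  ultimately have "CHAR('a) = 2" by simp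
  then show ?thesis using of_nat_CHAR[where 'a='a] by simp
qed

lemma add_self [simp]: "(x::'a) + x = 0"
proof -
  have "x + x = 2 * x" by (simp only: mult_2)
  also have "... = 0 * x" by (simp only: char2)
  finally show ?thesis by simp
qed

lemma neg_self [simp]: "- (x::'a) = x"
proof -
  have "- x = - x + (x + x)" by (simp only: add_self) simp
  also have "... = x" by (simp only: add.assoc[symmetric]) simp
  finally show ?thesis .
qed

lemma sq_add: "((x::'a) + y)^2 = x^2 + y^2"
proof -
  have "(x+y)^2 = x^2 + y^2 + 2*x*y" by (rule power2_sum)
  also have "... = x^2 + y^2 + 0*x*y" by (simp only: char2)
  finally show ?thesis by simp
qed

lemma frob: "((x::'a) + y)^(2^i) = x^(2^i) + y^(2^i)"
proof (induction i)
  case (Suc i)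
  have "(x+y)^(2^Suc i) = ((x+y)^(2^i))^2" by (simp add: power_mult[symmetric] mult.commute)
  also have "... = (x^(2^i))^2 + (y^(2^i))^2" using Suc by (simp add: sq_add)
  finally show ?case by (simp add: power_mult[symmetric] mult.commute)
qed simp

lemma sq_sum: "(\<Sum>i\<in>I. f i :: 'a)^2 = (\<Sum>i\<in>I. (f i)^2)"
proof (induction I rule: infinite_finite_induct)
  case (insert x F) thus ?case by (simp add: sq_add)
qed auto

lemma card_pos: "card (UNIV::'a set) > 0" by (simp add: finite_UNIV_card_ge_0)

lemma pow_card: "(x::'a)^(2^m) = x"
proof (cases "x = 0")
  case False
  let ?n = "card (UNIV :: 'a set)"
  have "x * (\<Prod>y\<in>UNIV-{0}. x * y) = x * x ^ (?n - 1) * \<Prod>(UNIV-{0})"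
    by (simp add: prod.distrib mult_ac)
  also have "x * x ^ (?n - 1) = x ^ Suc (?n - 1)"
    by (subst power_Suc) auto
  also have "Suc (?n - 1) = ?n"
    using card_pos by simp
  also have "(\<Prod>y\<in>UNIV-{0}. x * y) = (\<Prod>y\<in>UNIV-{0}. y)"
    by (rule prod.reindex_bij_witness[of _ "\<lambda>y. y / x" "\<lambda>y. x * y"]) (use False in auto)
  finally show ?thesis using cardF
    by simp
qed (use m1 in auto)

lemma pow_qm1: "(x::'a) \<noteq> 0 \<Longrightarrow> x^(2^m - 1) = 1"
proof -
  assume x: "x \<noteq> 0"
  have "x * x^(2^m-1) = x^(2^m)" using m1
    by (metis One_nat_def Suc_pred power_Suc zero_less_numeral zero_less_power)
  also have "... = x * 1" by (simp add: pow_card)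
  finally show ?thesis using x by simp
qed

lemma pow_mod: "(x::'a) \<noteq> 0 \<Longrightarrow> x^n = x^(n mod (2^m - 1))"
proof -
  assume x: "x \<noteq> 0"
  define k where "k = (2::nat)^m - 1"
  have k1: "x^k = 1" unfolding k_def by (rule pow_qm1[OF x])
  have "x^n = x^((n div k)*k + n mod k)" by (simp only: div_mult_mod_eq)
  also have "... = x^((n div k)*k) * x^(n mod k)" by (rule power_add)
  also have "x^((n div k)*k) = (x^k)^(n div k)" by (simp only: mult.commute[of "n div k"] power_mult)
  also have "(x^k)^(n div k) = 1" by (simp only: k1 power_one)
  finally show ?thesis unfolding k_def by (simp only: mult_1_left)
qed

lemma tr_add: "abs_trace m ((x::'a) + y) = abs_trace m x + abs_trace m y"
  unfolding abs_trace_def by (simp add: frob sum.distrib)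

lemma tr_sq: "(abs_trace m (x::'a))^2 = abs_trace m x"
proof -
  have "(abs_trace m x)^2 = (\<Sum>i<m. x^(2^(Suc i)))"
    unfolding abs_trace_def sq_sum by (simp add: power_mult[symmetric] mult.commute)
  also have "... + x = (\<Sum>i<Suc m. x^(2^i))"
    by (subst sum.lessThan_Suc_shift) simp
  also have "... = abs_trace m x + x" unfolding abs_trace_def by (simp add: pow_card)
  finally show ?thesis by simp
qed

lemma tr01: "abs_trace m (x::'a) = 0 \<or> abs_trace m x = 1"
proof -
  have "abs_trace m x * (abs_trace m x - 1) = 0" using tr_sq[of x]
    by (simp add: power2_eq_square algebra_simps)
  thus ?thesis by simp
qed

lemma sign_add: "tr_sign m ((x::'a) + y) = tr_sign m x * tr_sign m y"
  using tr01[of x] tr01[of y] unfolding tr_sign_def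
  by (auto simp: tr_add)

lemma tr0: "abs_trace m (0::'a) = 0"
  unfolding abs_trace_def by (simp add: zero_power)

lemma sign0 [simp]: "tr_sign m (0::'a) = 1"
  unfolding tr_sign_def by (simp add: tr0)

lemma tr_nontriv: "\<exists>b::'a. abs_trace m b \<noteq> 0"
proof (rule ccontr)
  assume H: "\<not> ?thesis"
  define p :: "'a poly" where "p = (\<Sum>i<m. monom 1 (2^i))"
  have ev: "poly p x = abs_trace m x" for x
    unfolding p_def abs_trace_def by (simp add: poly_sum poly_monom)
  have "coeff p (2^(m-1)) = (\<Sum>i<m. if 2^i = (2::nat)^(m-1) then 1 else 0)"
    unfolding p_def coeff_sum by (simp add: coeff_monom)
  also have "... = (\<Sum>i\<in>{m-1}. 1)"
    by (rule sum.mono_neutral_cong_right) (use m1 in auto)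
  finally have "coeff p (2^(m-1)) = 1" by simp
  hence p0: "p \<noteq> 0" by auto
  have "degree p \<le> 2^(m-1)" unfolding p_def
    by (rule degree_sum_le) (auto intro!: order.trans[OF degree_monom_le] power_increasing)
  moreover have "card {x. poly p x = 0} \<le> degree p" by (rule card_poly_roots_bound[OF p0])
  moreover have "{x. poly p x = 0} = UNIV" using H ev by auto
  ultimately have "card (UNIV::'a set) \<le> 2^(m-1)" by simp
  hence "(2::nat)^m \<le> 2^(m-1)" using cardF by metis
  moreover have "(2::nat)^(m-1) < 2^m" using m1 by (intro power_strict_increasing) auto
  ultimately show False by linarith
qed


lemma sign_pm: "tr_sign m (x::'a) = 1 \<or> tr_sign m x = -1"
  unfolding tr_sign_def by auto

lemma sign_sq [simp]: "tr_sign m (x::'a) * tr_sign m x = 1"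
  using sign_pm[of x] by auto

lemma add_cancel2 [simp]: "(x::'a) + (z + x) = z"
proof -
  have "x + (z + x) = z + (x + x)" by (rule add.left_commute)
  thus ?thesis by (simp only: add_self add_0_right)
qed

lemma sum_shift: "(\<Sum>x\<in>UNIV. f (x + b)) = (\<Sum>x\<in>UNIV. (f (x::'a) :: int))"
  by (rule sum.reindex_bij_witness[of _ "\<lambda>x. x + b" "\<lambda>x. x + b"])
     (simp_all add: add.assoc)

lemma sum_scale: "(c::'a) \<noteq> 0 \<Longrightarrow> (\<Sum>x\<in>UNIV. f (c * x)) = (\<Sum>x\<in>UNIV. (f x :: int))"
  by (rule sum.reindex_bij_witness[of _ "\<lambda>x. x / c" "\<lambda>x. c * x"]) auto

lemma sum_sign0: "(\<Sum>x\<in>UNIV. tr_sign m (x::'a)) = 0"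
proof -
  obtain b :: 'a where b: "abs_trace m b \<noteq> 0" using tr_nontriv by blast
  hence eb: "tr_sign m b = -1" unfolding tr_sign_def by simp
  have "(\<Sum>x\<in>UNIV. tr_sign m (x::'a)) = (\<Sum>x\<in>UNIV. tr_sign m (x + b))"
    by (rule sum_shift[symmetric])
  also have "... = (\<Sum>x\<in>UNIV. - tr_sign m (x::'a))" by (simp add: sign_add eb)
  finally show ?thesis by (simp add: sum_negf)
qed

lemma orth: "(\<Sum>a\<in>UNIV. tr_sign m (a * (s::'a))) = (if s = 0 then 2^m else 0)"
proof (cases "s = 0")
  case True thus ?thesis using cardF by simp
next
  case False
  have "(\<Sum>a\<in>UNIV. tr_sign m (a * s)) = (\<Sum>a\<in>UNIV. tr_sign m (s * a))" by (simp add: mult.commute)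
  also have "... = (\<Sum>a\<in>UNIV. tr_sign m (a::'a))" by (rule sum_scale[OF False, of "tr_sign m"])
  finally show ?thesis using False sum_sign0 by simp
qed

lemma sumA: "(\<Sum>a\<in>UNIV. \<Sum>z\<in>UNIV. tr_sign m (a * (z::'a)) * K z) = 2^m * K 0"
proof -
  have "(\<Sum>a\<in>UNIV. \<Sum>z\<in>UNIV. tr_sign m (a * (z::'a)) * K z)
      = (\<Sum>z\<in>UNIV. (\<Sum>a\<in>UNIV. tr_sign m (a * z)) * K z)"
    by (subst sum.swap) (simp add: sum_distrib_right)
  also have "... = (\<Sum>z\<in>UNIV. (if z = 0 then 2^m * K z else 0))" by (rule sum.cong) (auto simp: orth)
  also have "... = 2^m * K 0" by simp
  finally show ?thesis .
qed

lemma conv: "(\<Sum>x\<in>UNIV. tr_sign m (a*x) * G x) * (\<Sum>y\<in>UNIV. tr_sign m (a*y) * H y)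
   = (\<Sum>z\<in>UNIV. tr_sign m (a*(z::'a)) * (\<Sum>x\<in>UNIV. G x * H (z + x)))"
proof -
  have "(\<Sum>x\<in>UNIV. tr_sign m (a*x) * G x) * (\<Sum>y\<in>UNIV. tr_sign m (a*y) * H y)
     = (\<Sum>x\<in>UNIV. \<Sum>y\<in>UNIV. tr_sign m (a*(x+y)) * (G x * H y))"
    by (simp add: sum_product sign_add distrib_left mult_ac)
  also have "... = (\<Sum>x\<in>UNIV. \<Sum>z\<in>UNIV. tr_sign m (a*z) * (G x * H (z + x)))"
  proof (rule sum.cong[OF refl])
    fix x
    show "(\<Sum>y\<in>UNIV. tr_sign m (a*(x+y)) * (G x * H y)) = (\<Sum>z\<in>UNIV. tr_sign m (a*z) * (G x * H (z + x)))"
      using sum_shift[of "\<lambda>y. tr_sign m (a*(x+y)) * (G x * H y)" x]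
      by (simp add: add_cancel2)
  qed
  also have "... = (\<Sum>z\<in>UNIV. tr_sign m (a*(z::'a)) * (\<Sum>x\<in>UNIV. G x * H (z + x)))"
    by (subst sum.swap) (simp add: sum_distrib_left)
  finally show ?thesis .
qed


lemma pow_inv:
  assumes d: "d > 0" and cop: "coprime d (2^m - 1)"
  obtains u where "\<And>x::'a. (x^d)^u = x" "\<And>x::'a. (x^u)^d = x"
proof -
  define k where "k = (2::nat)^m - 1"
  have "(2::nat)^1 \<le> 2^m" by (rule power_increasing) (use m1 in auto)
  hence k1: "k \<ge> 1" unfolding k_def by simp
  obtain u where u: "[d * u = Suc 0] (mod k)" using cong_solve_coprime_nat cop k_def by blast
  define u' where "u' = u + k"
  have md: "(d * u') mod k = 1 mod k"
  proof -
    have "d * u' = d*u + d * k" unfolding u'_def by (simp add: algebra_simps)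
    hence "(d * u') mod k = (d*u) mod k" by simp
    thus ?thesis using u unfolding cong_def by simp
  qed
  have pos: "d * u' > 0" using d k1 unfolding u'_def by simp
  have key: "x^(d*u') = x" for x :: 'a
  proof (cases "x = 0")
    case True thus ?thesis using pos by (simp add: zero_power)
  next
    case False
    have "x^(d*u') = x^((d*u') mod k)" using pow_mod[OF False] k_def by simp
    also have "... = x^(1 mod k)" using md by simp
    also have "... = x^1" using pow_mod[OF False, of 1] k_def by simp
    finally show ?thesis by simp
  qed
  show ?thesis
  proof (rule that)
    fix x :: 'a
    show "(x^d)^u' = x" using key by (simp add: power_mult)
    show "(x^u')^d = x" using key by (simp add: power_mult[symmetric] mult.commute)
  qed
qed

lemma pow_bij:
  assumes d: "d > 0" and cop: "coprime d (2^m - 1)"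
  shows "bij (\<lambda>x::'a. x^d)"
proof -
  obtain u where u1: "\<And>x::'a. (x^d)^u = x" and u2: "\<And>x::'a. (x^u)^d = x"
    using pow_inv[OF d cop] by blast
  show ?thesis
    by (rule o_bij[of "\<lambda>x. x^u"]) (auto simp: u1 u2 fun_eq_iff)
qed

lemma sum_pow: 
  assumes d: "d > 0" and cop: "coprime d (2^m - 1)"
  shows "(\<Sum>x\<in>UNIV. f ((x::'a)^d)) = (\<Sum>x\<in>UNIV. (f x :: int))"
  by (rule sum.reindex_bij_betw[OF pow_bij[OF d cop]])

lemma W_alt: "Wd m d a = (\<Sum>x\<in>UNIV. tr_sign m (a*x) * tr_sign m ((x::'a)^d))"
  unfolding Wd_def by (simp add: sign_add)

lemma W0:
  assumes d: "d > 0" and cop: "coprime d (2^m - 1)"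
  shows "Wd m d (0::'a) = 0"
  unfolding Wd_def using sum_pow[OF d cop, of "tr_sign m"] sum_sign0 by simp

lemma S1:
  assumes d: "d > 0"
  shows "(\<Sum>a\<in>UNIV. Wd m d (a::'a)) = 2^m"
  unfolding W_alt using sumA[of "\<lambda>x. tr_sign m ((x::'a)^d)"] d by (simp add: zero_power)

lemma S2:
  assumes d: "d > 0"
  shows "(\<Sum>a\<in>UNIV. (Wd m d (a::'a))^2) = 2^m * 2^m"
proof -
  let ?g = "\<lambda>x::'a. tr_sign m (x^d)"
  have "(\<Sum>a\<in>UNIV. (Wd m d (a::'a))^2) = (\<Sum>a\<in>UNIV. \<Sum>z\<in>UNIV. tr_sign m (a*z) * (\<Sum>x\<in>UNIV. ?g x * ?g (z + x)))"
    unfolding W_alt power2_eq_square by (simp add: conv)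
  also have "... = 2^m * (\<Sum>x\<in>UNIV. ?g x * ?g (0 + x))" by (rule sumA)
  also have "... = 2^m * 2^m" using cardF by simp
  finally show ?thesis .
qed

lemma S3:
  assumes d: "d > 0"
  shows "(\<Sum>a\<in>UNIV. (Wd m d (a::'a))^3) = 2^m * Tsum m d TYPE('a)"
proof -
  let ?g = "\<lambda>x::'a. tr_sign m (x^d)"
  have "(\<Sum>a\<in>UNIV. (Wd m d (a::'a))^3) = (\<Sum>a\<in>UNIV. 
      (\<Sum>z\<in>UNIV. tr_sign m (a*z) * (\<Sum>x\<in>UNIV. ?g x * ?g (z + x))) * (\<Sum>y\<in>UNIV. tr_sign m (a*y) * ?g y))"
    unfolding W_alt power3_eq_cube by (simp add: conv)
  also have "... = (\<Sum>a\<in>UNIV. \<Sum>w\<in>UNIV. tr_sign m (a*w) * (\<Sum>z\<in>UNIV. (\<Sum>x\<in>UNIV. ?g x * ?g (z + x)) * ?g (w + z)))"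
    by (simp only: conv)
  also have "... = 2^m * (\<Sum>z\<in>UNIV. (\<Sum>x\<in>UNIV. ?g x * ?g (z + x)) * ?g (0 + z))" by (rule sumA)
  also have "(\<Sum>z\<in>UNIV. (\<Sum>x\<in>UNIV. ?g x * ?g (z + x)) * ?g (0 + z)) = Tsum m d TYPE('a)"
    unfolding Tsum_def by (simp add: sum_distrib_left sum_distrib_right sign_add mult_ac)
  finally show ?thesis .
qed

lemma T_dvd:
  assumes d: "d > 0" and cop: "coprime d (2^m - 1)"
  shows "(2::int)^m dvd Tsum m d TYPE('a)"
proof -
  define h where "h = (\<lambda>z x. x^d + (z + x)^d + z^d :: 'a)"
  define T where "T = Tsum m d TYPE('a)"
  have Tdef: "T = (\<Sum>z\<in>UNIV. \<Sum>x\<in>UNIV. tr_sign m (h z x))" unfolding T_def Tsum_def h_def by simp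
  have hc: "h (c*z) (c*x) = c^d * h z x" for c z x
    unfolding h_def by (simp only: distrib_left[symmetric] power_mult_distrib)
  have Tc: "(\<Sum>z\<in>UNIV. \<Sum>x\<in>UNIV. tr_sign m (c^d * h z x)) = (if c = 0 then 2^m * 2^m else T)" for c :: 'a
  proof (cases "c = 0")
    case True thus ?thesis using d cardF by (simp add: zero_power)
  next
    case False
    have "(\<Sum>z\<in>UNIV. \<Sum>x\<in>UNIV. tr_sign m (c^d * h z x)) = (\<Sum>z\<in>UNIV. \<Sum>x\<in>UNIV. tr_sign m (h (c*z) (c*x)))"
      by (simp add: hc)
    also have "... = (\<Sum>z\<in>UNIV. \<Sum>x\<in>UNIV. tr_sign m (h (c*z) x))"
      by (rule sum.cong[OF refl], rule sum_scale[OF False, of "\<lambda>x. tr_sign m (h (c*_) x)"])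
    also have "... = (\<Sum>z\<in>UNIV. \<Sum>x\<in>UNIV. tr_sign m (h z x))"
      by (rule sum_scale[OF False, of "\<lambda>z. \<Sum>x\<in>UNIV. tr_sign m (h z x)"])
    finally show ?thesis using False Tdef by simp
  qed
  have "(\<Sum>c\<in>UNIV. \<Sum>z\<in>UNIV. \<Sum>x\<in>UNIV. tr_sign m (c^d * h z x))
      = (\<Sum>z\<in>UNIV. \<Sum>c\<in>UNIV. \<Sum>x\<in>UNIV. tr_sign m (c^d * h z x))"
    by (rule sum.swap)
  also have "... = (\<Sum>z\<in>UNIV. \<Sum>x\<in>UNIV. \<Sum>c\<in>UNIV. tr_sign m (c^d * h z x))"
    by (rule sum.cong[OF refl], rule sum.swap)
  also have "... = (\<Sum>z\<in>UNIV. \<Sum>x\<in>UNIV. \<Sum>c\<in>UNIV. tr_sign m (c * h z x))"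
    by (intro sum.cong refl sum_pow[OF d cop, of "\<lambda>c. tr_sign m (c * h _ _)"])
  also have "... = (\<Sum>z\<in>UNIV. \<Sum>x\<in>UNIV. (if h z x = 0 then 2^m else 0))"
    by (simp add: orth)
  finally have eq: "(\<Sum>c\<in>(UNIV::'a set). (if c = 0 then 2^m * 2^m else T)) = (\<Sum>z\<in>UNIV. \<Sum>x\<in>UNIV. (if h z x = 0 then (2::int)^m else 0))"
    using Tc by simp
  have "(2::int)^m dvd (\<Sum>z\<in>UNIV. \<Sum>x\<in>UNIV. (if h z x = 0 then (2::int)^m else 0))"
    by (intro dvd_sum) auto
  moreover have "(\<Sum>c\<in>(UNIV::'a set). (if c = 0 then 2^m * 2^m else T)) = 2^m * 2^m + (2^m - 1) * T"
  proof -
    have "(\<Sum>c\<in>(UNIV::'a set). (if c = 0 then 2^m * 2^m else T)) = 2^m*2^m + (\<Sum>c\<in>UNIV - {0::'a}. T)"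
      by (subst sum.remove[of _ 0]) auto
    moreover have "card (UNIV - {0::'a}) = 2^m - 1" using cardF by (simp add: card_Diff_singleton)
    hence "(\<Sum>c\<in>UNIV - {0::'a}. T) = (2^m - 1) * T" using m1 by (simp add: of_nat_diff)
    ultimately show ?thesis by simp
  qed
  ultimately have "(2::int)^m dvd 2^m * 2^m + (2^m - 1) * T" using eq by simp
  hence "(2::int)^m dvd (2^m - 1) * T" by (simp add: dvd_add_right_iff)
  hence "(2::int)^m dvd 2^m * T - (2^m - 1) * T" by (simp add: dvd_diff)
  moreover have "2^m * T - (2^m - 1) * T = T" by (simp add: algebra_simps)
  ultimately show ?thesis unfolding T_def by simp
qed


lemma cc:
  assumes d: "d > 0"
  shows "cross_corr m (\<alpha>::'a) d t = Wd m d (inverse (\<alpha>^t)) - 1"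
proof -
  have "Wd m d (inverse (\<alpha>^t)) = tr_sign m (inverse (\<alpha>^t) * 0 + 0^d) + cross_corr m \<alpha> d t"
    unfolding Wd_def cross_corr_def by (subst sum.remove[of _ 0]) auto
  thus ?thesis using d by (simp add: zero_power)
qed

lemma img:
  assumes gen: "mult_generator (\<alpha>::'a)"
  shows "(\<lambda>t. inverse (\<alpha>^t)) ` {0..<2^m-1} = UNIV - {0}"
proof
  have a0: "\<alpha> \<noteq> 0" using gen unfolding mult_generator_def by simp
  show "(\<lambda>t. inverse (\<alpha>^t)) ` {0..<2^m-1} \<subseteq> UNIV - {0}" using a0 by auto
  show "UNIV - {0} \<subseteq> (\<lambda>t. inverse (\<alpha>^t)) ` {0..<2^m-1}"
  proof
    fix a :: 'a assume "a \<in> UNIV - {0}"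
    hence a: "a \<noteq> 0" by simp
    have "inverse a \<noteq> 0" using a by simp
    then obtain i where i: "inverse a = \<alpha>^i" using gen unfolding mult_generator_def by blast
    have "(2::nat)^1 \<le> 2^m" by (rule power_increasing) (use m1 in auto)
    hence k: "(2::nat)^m - 1 > 0" by simp
    have "inverse a = \<alpha>^(i mod (2^m-1))" using i pow_mod[OF a0] by simp
    hence "a = inverse (\<alpha>^(i mod (2^m-1)))" by (metis inverse_inverse_eq)
    moreover have "i mod (2^m-1) \<in> {0..<2^m-1}" using k by simp
    ultimately show "a \<in> (\<lambda>t. inverse (\<alpha>^t)) ` {0..<2^m-1}" by blast
  qed
qed

lemma sum_D: "f (0::'a) = (0::int) \<Longrightarrow> (\<Sum>a\<in>UNIV-{0}. f a) = (\<Sum>a\<in>UNIV. f a)"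
  by (subst (2) sum.remove[of _ 0]) auto

lemma poly2: "(\<Sum>a\<in>D. (f a - B)*(f a - C)) = (\<Sum>a\<in>D. f a^2) - (B+C)*(\<Sum>a\<in>D. f a) + B*C*int(card D)"
proof -
  have "(\<Sum>a\<in>D. (f a - B)*(f a - C)) = (\<Sum>a\<in>D. f a^2 - (B+C) * f a + B*C)"
    by (rule sum.cong) (auto simp: algebra_simps power2_eq_square)
  also have "... = (\<Sum>a\<in>D. f a^2) - (B+C)*(\<Sum>a\<in>D. f a) + B*C*int(card D)"
    by (simp add: sum.distrib sum_subtractf sum_distrib_left)
  finally show ?thesis .
qed

lemma poly3: "(\<Sum>a\<in>D. (f a - A)*(f a - B)*(f a - C)) = (\<Sum>a\<in>D. f a^3) - (A+B+C)*(\<Sum>a\<in>D. f a^2)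
   + (A*B+B*C+C*A)*(\<Sum>a\<in>D. f a) - A*B*C*int(card D)"
proof -
  have "(\<Sum>a\<in>D. (f a - A)*(f a - B)*(f a - C)) = (\<Sum>a\<in>D. f a^3 - (A+B+C) * f a^2 + (A*B+B*C+C*A) * f a - A*B*C)"
    by (rule sum.cong) (auto simp: algebra_simps power2_eq_square power3_eq_cube)
  also have "... = (\<Sum>a\<in>D. f a^3) - (A+B+C)*(\<Sum>a\<in>D. f a^2)
   + (A*B+B*C+C*A)*(\<Sum>a\<in>D. f a) - A*B*C*int(card D)"
    by (simp add: sum.distrib sum_subtractf sum_distrib_left)
  finally show ?thesis .
qed

lemma main:
  assumes gen: "mult_generator (\<alpha>::'a)" and d: "d > 0" and cop: "coprime d (2^m - 1)"
    and three: "card (cross_corr m \<alpha> d ` {0..<2^m - 1}) = 3"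
  shows "\<exists>t\<in>{0..<2^m - 1}. cross_corr m \<alpha> d t = -1"
proof (rule ccontr)
  assume nt: "\<not> ?thesis"
  define D where "D = UNIV - {0::'a}"
  define W where "W = (Wd m d :: 'a \<Rightarrow> int)"
  define V where "V = W ` D"
  define q where "q = (2::int)^m"
  have imgc: "cross_corr m \<alpha> d ` {0..<2^m - 1} = (\<lambda>w. w - 1) ` V"
  proof -
    have "cross_corr m \<alpha> d ` {0..<2^m - 1} = (\<lambda>a. W a - 1) ` ((\<lambda>t. inverse (\<alpha>^t)) ` {0..<2^m-1})"
      unfolding image_image W_def using cc[OF d] by simp
    also have "... = (\<lambda>w. w - 1) ` V" unfolding img[OF gen] V_def D_def image_image by simp
    finally show ?thesis .
  qed
  have cV: "card V = 3" using three unfolding imgc by (subst (asm) card_image) (auto simp: inj_on_def)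
  have V0: "0 \<notin> V"
  proof
    assume "0 \<in> V"
    hence "-1 \<in> cross_corr m \<alpha> d ` {0..<2^m - 1}" unfolding imgc by force
    thus False using nt by auto
  qed
  have cD: "card D = 2^m - 1" unfolding D_def using cardF by (simp add: card_Diff_singleton)
  have cDi: "int (card D) = q - 1" unfolding cD q_def using m1 by (simp add: of_nat_diff)
  have "card V \<le> card D" unfolding V_def by (rule card_image_le) simp
  hence m2: "(2::nat)^m \<ge> 4" using cV cD by simp
  obtain x y z where xyz: "V = {x,y,z}" "x \<noteq> y" "y \<noteq> z" "x \<noteq> z" using cV card_3_iff by metis
  then obtain A B C where ABC: "V = {A,B,C}" "A < B" "B < C" using sort3 by metis
  have inV: "W a \<in> {A,B,C}" if "a \<in> D" for a using that ABC(1) unfolding V_def by blast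
  have att: "\<exists>a\<in>D. W a = w" if "w \<in> {A,B,C}" for w
  proof -
    have "w \<in> W ` D" using that ABC(1) unfolding V_def by simp
    thus ?thesis by blast
  qed
  have nz: "A \<noteq> 0" "B \<noteq> 0" "C \<noteq> 0" using V0 ABC(1) by auto
  have W0': "W 0 = 0" unfolding W_def by (rule W0[OF d cop])
  have finD: "finite D" by simp
  have s1: "(\<Sum>a\<in>D. W a) = q" unfolding D_def q_def using sum_D[of W] W0' S1[OF d] W_def by simp
  have s2: "(\<Sum>a\<in>D. W a^2) = q*q" unfolding D_def q_def using sum_D[of "\<lambda>a. W a^2"] W0' S2[OF d] W_def by simp
  have s3: "(\<Sum>a\<in>D. W a^3) = q * Tsum m d TYPE('a)" unfolding D_def q_def
    using sum_D[of "\<lambda>a. W a^3"] W0' S3[OF d] W_def by simp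
  have s3d: "q^2 dvd (\<Sum>a\<in>D. W a^3)" unfolding s3 using T_dvd[OF d cop] unfolding q_def
    by (simp add: power2_eq_square)
  have bound: "\<bar>W a\<bar> < q" if a: "a \<in> D" for a
  proof (rule ccontr)
    assume "\<not> \<bar>W a\<bar> < q"
    hence qa: "q \<le> \<bar>W a\<bar>" by simp
    have q0: "q \<ge> 0" unfolding q_def by simp
    have "q*q \<le> \<bar>W a\<bar> * \<bar>W a\<bar>" using qa q0 by (intro mult_mono) auto
    hence ge: "q*q \<le> W a^2" by (simp add: power2_eq_square)
    have "card (D - {a}) \<ge> 1" using cD m2 a by (simp add: card_Diff_singleton)
    then obtain b where b: "b \<in> D" "b \<noteq> a" by (metis card_0_eq finite_Diff finD Diff_iff insertI1 not_one_le_zero ex_in_conv)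
    have "W b \<noteq> 0" using V0 b unfolding V_def by auto
    hence "W b^2 > 0" by simp
    have "W a^2 + W b^2 = (\<Sum>c\<in>{a,b}. W c^2)" using b by simp
    also have "... \<le> (\<Sum>c\<in>D. W c^2)" by (rule sum_mono2) (use a b in auto)
    finally show False using s2 ge \<open>W b^2 > 0\<close> by linarith
  qed
  obtain aA where aA: "aA \<in> D" "W aA = A" using att by blast
  obtain aB where aB: "aB \<in> D" "W aB = B" using att by blast
  obtain aC where aC: "aC \<in> D" "W aC = C" using att by blast
  have bd: "\<bar>A\<bar> < q" "\<bar>B\<bar> < q" "\<bar>C\<bar> < q" using bound aA aB aC by auto
  have p1: "(\<Sum>a\<in>D. (W a - B)*(W a - C)) > 0"
  proof (rule sum_pos2[OF finD aA(1)])
    show "0 < (W aA - B)*(W aA - C)" using aA ABC by (simp add: mult_neg_neg)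
    show "0 \<le> (W a - B)*(W a - C)" if "a \<in> D" for a
      using inV[OF that] ABC by (auto simp: mult_neg_neg less_imp_le)
  qed
  have p3: "(\<Sum>a\<in>D. (W a - A)*(W a - B)) > 0"
  proof (rule sum_pos2[OF finD aC(1)])
    show "0 < (W aC - A)*(W aC - B)" using aC ABC by simp
    show "0 \<le> (W a - A)*(W a - B)" if "a \<in> D" for a
      using inV[OF that] ABC by (auto simp: mult_neg_neg less_imp_le)
  qed
  have p2: "(\<Sum>a\<in>D. (W a - A)*(C - W a)) > 0"
  proof (rule sum_pos2[OF finD aB(1)])
    show "0 < (W aB - A)*(C - W aB)" using aB ABC by simp
    show "0 \<le> (W a - A)*(C - W a)" if "a \<in> D" for a
      using inV[OF that] ABC by auto
  qed
  have p2': "(\<Sum>a\<in>D. (W a - A)*(W a - C)) < 0"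
  proof -
    have "(\<Sum>a\<in>D. (W a - A)*(W a - C)) = - (\<Sum>a\<in>D. (W a - A)*(C - W a))"
      by (simp add: sum_negf[symmetric] algebra_simps)
    thus ?thesis using p2 by simp
  qed
  have z3: "(\<Sum>a\<in>D. (W a - A)*(W a - B)*(W a - C)) = 0"
    by (rule sum.neutral) (use inV in auto)
  have h1: "q^2 - (B+C)*q + B*C*(q-1) > 0" using p1 unfolding poly2 s1 s2 cDi by (simp add: power2_eq_square)
  have h2: "q^2 - (A+C)*q + A*C*(q-1) < 0" using p2' unfolding poly2 s1 s2 cDi by (simp add: power2_eq_square)
  have h3: "q^2 - (A+B)*q + A*B*(q-1) > 0" using p3 unfolding poly2 s1 s2 cDi by (simp add: power2_eq_square)
  have "(\<Sum>a\<in>D. W a^3) = (A+B+C)*q^2 - (A*B+B*C+C*A)*q + A*B*C*(q-1)"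
    using z3 unfolding poly3 s1 s2 cDi by (simp add: power2_eq_square algebra_simps)
  hence h4: "q^2 dvd (A+B+C)*q^2 - (A*B+B*C+C*A)*q + A*B*C*(q-1)" using s3d by simp
  show False using key_int[OF q_def m1 ABC(2,3) nz bd h1 h2 h3 h4] .
qed

end

theorem theorem4:
  fixes \<alpha> :: "'a::{field,finite}" and m d :: nat
  assumes "m \<ge> 1"
    and "card (UNIV :: 'a set) = 2 ^ m"
    and "mult_generator \<alpha>"
    and "d > 0"
    and "coprime d (2 ^ m - 1)"
    and "card (cross_corr m \<alpha> d ` {0..<2 ^ m - 1}) = 3"
  shows "\<exists>t\<in>{0..<2 ^ m - 1}. cross_corr m \<alpha> d t = -1"
  by (rule main[OF assms(2) assms(1) assms(3) assms(4) assms(5) assms(6)])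

end
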